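(* Let $n>2k$, $k\ge t+3$, and let $\mathcal F\subseteq\binom{[n]}{k}$ be a maximal $t$-intersecting family with $\tau_t(\mathcal F)=t+2$ and $\tau_t(\mathcal T_t(\mathcal F))=t+2$. If $\mathcal T_t(\mathcal F)=\binom{Z}{t+2}$ for some $Z\in\binom{[n]}{t+4}$, then: (i) $\mathcal F=\{F\in\binom{[n]}{k}: |F\cap Z|\ge t+2\}$; (ii) $|\mathcal F|>\binom{t+4}{2}\left(\binom{n-t-2}{k-t-2}-2\binom{n-t-3}{k-t-3}\right)$.
   Context: A family is $t$-intersecting if any two members meet in at least $t$ elements. A $t$-cover of a family $\mathcal G$ of subsets of $[n]$ is a set $S\subseteq[n]$ with $|S\cap G|\ge t$ for all $G\in\mathcal G$; $\tau_t(\mathcal G)$ is the minimum size of a $t$-cover, and $\mathcal T_t(\mathcal G)$ is the set of all $t$-covers of $\mathcal G$ of size $\tau_t(\mathcal G)$. A $t$-intersecting $\mathcal F\subseteq\binom{[n]}{k}$ is maximal if no $t$-intersecting subfamily of $\binom{[n]}{k}$ properly contains it. *)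

theory Defs
  imports Complex_Main
begin

definition ksets :: "nat \<Rightarrow> nat \<Rightarrow> nat set set" where
  "ksets n k = {F. F \<subseteq> {1..n} \<and> card F = k}"

definition t_intersecting :: "nat \<Rightarrow> nat set set \<Rightarrow> bool" where
  "t_intersecting t \<F> \<longleftrightarrow> (\<forall>A\<in>\<F>. \<forall>B\<in>\<F>. card (A \<inter> B) \<ge> t)"

definition maximal_t_intersecting :: "nat \<Rightarrow> nat \<Rightarrow> nat \<Rightarrow> nat set set \<Rightarrow> bool" where
  "maximal_t_intersecting n k t \<F> \<longleftrightarrow>
     \<F> \<subseteq> ksets n k \<and> t_intersecting t \<F> \<and>
     (\<forall>\<G>. \<G> \<subseteq> ksets n k \<and> t_intersecting t \<G> \<and> \<F> \<subseteq> \<G> \<longrightarrow> \<G> = \<F>)"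

definition t_cover :: "nat \<Rightarrow> nat \<Rightarrow> nat set set \<Rightarrow> nat set \<Rightarrow> bool" where
  "t_cover n t \<G> S \<longleftrightarrow> S \<subseteq> {1..n} \<and> (\<forall>G\<in>\<G>. card (S \<inter> G) \<ge> t)"

definition tau :: "nat \<Rightarrow> nat \<Rightarrow> nat set set \<Rightarrow> nat" where
  "tau n t \<G> = (LEAST m. \<exists>S. t_cover n t \<G> S \<and> card S = m)"

definition Tcov :: "nat \<Rightarrow> nat \<Rightarrow> nat set set \<Rightarrow> nat set set" where
  "Tcov n t \<G> = {S. t_cover n t \<G> S \<and> card S = tau n t \<G>}"

end

theory Submission
  imports Defs
begin

lemma binom_ineq: "((a+2) choose (b+1)) \<le> (a choose (b+1)) + 2 * ((a+1) choose b)"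
proof -
  have "((a+2) choose (b+1)) = ((a+1) choose (b+1)) + ((a+1) choose b)"
    using binomial_Suc_Suc[of "a+1" b] by simp
  moreover have "((a+1) choose (b+1)) = (a choose (b+1)) + (a choose b)"
    using binomial_Suc_Suc[of a b] by simp
  moreover have "(a choose b) \<le> ((a+1) choose b)"
    by (cases b) auto
  ultimately show ?thesis by linarith
qed

theorem lemma2p11:
  fixes n k t :: nat and \<F> :: "nat set set" and Z :: "nat set"
  assumes "n > 2 * k" and "k \<ge> t + 3"
    and "maximal_t_intersecting n k t \<F>"
    and "tau n t \<F> = t + 2"
    and "tau n t (Tcov n t \<F>) = t + 2"
    and "Z \<in> ksets n (t + 4)"
    and "Tcov n t \<F> = {S. S \<subseteq> Z \<and> card S = t + 2}"
  shows "\<F> = {F \<in> ksets n k. card (F \<inter> Z) \<ge> t + 2} \<and>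
         real (card \<F>) > real ((t + 4) choose 2) *
           (real ((n - t - 2) choose (k - t - 2)) - 2 * real ((n - t - 3) choose (k - t - 3)))"
proof -
  define G where "G = {F \<in> ksets n k. card (F \<inter> Z) \<ge> t + 2}"
  have Zs: "Z \<subseteq> {1..n}" "card Z = t + 4" using assms(6) by (auto simp: ksets_def)
  have fZ: "finite Z" using Zs finite_subset by blast
  have maxF: "\<F> \<subseteq> ksets n k" "t_intersecting t \<F>"
    "\<And>\<G>. \<G> \<subseteq> ksets n k \<Longrightarrow> t_intersecting t \<G> \<Longrightarrow> \<F> \<subseteq> \<G> \<Longrightarrow> \<G> = \<F>"
    using assms(3) unfolding maximal_t_intersecting_def by blast+
  have t1: "t \<ge> 1"
  proof (rule ccontr)
    assume "\<not> t \<ge> 1"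
    hence t0: "t = 0" by simp
    have "t_cover n t \<F> {}" using t0 by (simp add: t_cover_def)
    hence "tau n t \<F> = 0" unfolding tau_def by (intro Least_eq_0) auto
    thus False using assms(4) by simp
  qed
  have sub: "\<F> \<subseteq> G"
  proof
    fix A assume A: "A \<in> \<F>"
    have Ak: "A \<in> ksets n k" using A maxF(1) by blast
    show "A \<in> G"
    proof (rule ccontr)
      assume "A \<notin> G"
      hence c: "card (A \<inter> Z) \<le> t + 1" using Ak by (simp add: G_def)
      have "card (Z - A) = card Z - card (A \<inter> Z)"
        using fZ by (simp add: card_Diff_subset_Int Int_commute)
      hence "card (Z - A) \<ge> 3" using c Zs by linarith
      then obtain D where D: "D \<subseteq> Z - A" "card D = 3" "finite D" by (meson obtain_subset_with_card_n)
      have "D \<subseteq> Z" using D by blast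
      hence "card (Z - D) = t + 1" using D Zs fZ by (simp add: card_Diff_subset)
      hence "t - 1 \<le> card (Z - D)" by simp
      then obtain E where E: "E \<subseteq> Z - D" "card E = t - 1" "finite E"
        by (rule obtain_subset_with_card_n)
      define S where "S = D \<union> E"
      have "card S = t + 2" unfolding S_def using D E t1
        by (subst card_Un_disjoint) auto
      moreover have "S \<subseteq> Z" using D E S_def by auto
      ultimately have "S \<in> Tcov n t \<F>" using assms(7) by simp
      hence "card (S \<inter> A) \<ge> t" using A by (simp add: Tcov_def t_cover_def)
      moreover have "S \<inter> A \<subseteq> E" using D S_def by auto
      hence "card (S \<inter> A) \<le> t - 1" using E card_mono by metis
      ultimately show False using t1 by linarith
    qed
  qed
  have Gk: "G \<subseteq> ksets n k" by (auto simp: G_def)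
  have Gi: "t_intersecting t G" unfolding t_intersecting_def
  proof (intro ballI)
    fix A B assume A: "A \<in> G" and B: "B \<in> G"
    have fA: "finite A" using A by (auto simp: G_def ksets_def intro: finite_subset)
    have "card (A \<inter> Z) + card (B \<inter> Z) = card ((A \<inter> Z) \<union> (B \<inter> Z)) + card ((A \<inter> Z) \<inter> (B \<inter> Z))"
      using fZ by (intro card_Un_Int) auto
    moreover have "card ((A \<inter> Z) \<union> (B \<inter> Z)) \<le> t + 4" using Zs fZ
      by (metis Int_Un_distrib2 card_mono inf_le2)
    moreover have "card ((A \<inter> Z) \<inter> (B \<inter> Z)) \<le> card (A \<inter> B)"
      using fA by (intro card_mono) auto
    ultimately show "card (A \<inter> B) \<ge> t" using A B by (simp add: G_def)
  qed
  have eq: "\<F> = G" using maxF(3)[OF Gk Gi sub] by simp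
  define W where "W = {1..n} - Z"
  have fW: "finite W" and cW: "card W = n - (t + 4)" using Zs card_Diff_subset[OF fZ Zs(1)] by (auto simp: W_def)
  define P where "P = {S. S \<subseteq> Z \<and> card S = t + 2}"
  define Q where "Q = {B. B \<subseteq> W \<and> card B = k - t - 2}"
  have cP: "card P = (t + 4) choose 2"
    using n_subsets[OF fZ, of "t+2"] Zs binomial_symmetric[of 2 "t+4"] by (simp add: P_def)
  have cQ: "card Q = (n - t - 4) choose (k - t - 2)"
    using n_subsets[OF fW, of "k-t-2"] cW by (simp add: Q_def)
  define G2 where "G2 = (\<lambda>(S,B). S \<union> B) ` (P \<times> Q)"
  have inj: "inj_on (\<lambda>(S,B). S \<union> B) (P \<times> Q)"
  proof (rule inj_onI)
    fix x y assume x: "x \<in> P \<times> Q" and y: "y \<in> P \<times> Q" and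
      exy: "(\<lambda>(S,B). S \<union> B) x = (\<lambda>(S,B). S \<union> B) y"
    obtain S B where xs: "x = (S,B)" by (cases x)
    obtain S' B' where ys: "y = (S',B')" by (cases y)
    have e: "S \<union> B = S' \<union> B'" using exy xs ys by simp
    have h: "S \<subseteq> Z" "S' \<subseteq> Z" "B \<inter> Z = {}" "B' \<inter> Z = {}"
      using x y xs ys by (auto simp: P_def Q_def W_def)
    have "S = (S \<union> B) \<inter> Z" "S' = (S' \<union> B') \<inter> Z" using h by auto
    moreover have "B = (S \<union> B) - Z" "B' = (S' \<union> B') - Z" using h by auto
    ultimately show "x = y" using e xs ys by metis
  qed
  have cG2: "card G2 = card P * card Q"
    unfolding G2_def by (simp add: card_image[OF inj] card_cartesian_product)
  have G2G: "G2 \<subseteq> G"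
  proof
    fix X assume "X \<in> G2"
    then obtain S B where SB: "S \<in> P" "B \<in> Q" "X = S \<union> B" by (auto simp: G2_def)
    have h: "S \<subseteq> Z" "card S = t + 2" "B \<subseteq> W" "card B = k - t - 2" using SB by (auto simp: P_def Q_def)
    have fS: "finite S" "finite B" using h fZ fW finite_subset by blast+
    have "card X = k" using SB h fS assms(2) W_def
      by (subst SB(3), subst card_Un_disjoint) auto
    moreover have "X \<inter> Z = S" using h SB W_def by auto
    moreover have "X \<subseteq> {1..n}" using h SB Zs W_def by auto
    ultimately show "X \<in> G" using h by (simp add: G_def ksets_def)
  qed
  have "t + 3 \<le> card Z" using Zs by simp
  then obtain Z' where Z': "Z' \<subseteq> Z" "card Z' = t + 3" "finite Z'"
    by (rule obtain_subset_with_card_n)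
  have "k - t - 3 \<le> card W" using cW assms(1,2) by linarith
  then obtain B0 where B0: "B0 \<subseteq> W" "card B0 = k - t - 3" "finite B0" by (meson obtain_subset_with_card_n)
  define F0 where "F0 = Z' \<union> B0"
  have F0Z: "F0 \<inter> Z = Z'" using Z' B0 W_def F0_def by auto
  have "card F0 = k" unfolding F0_def using Z' B0 W_def assms(2)
    by (subst card_Un_disjoint) auto
  moreover have "F0 \<subseteq> {1..n}" using Z' B0 Zs W_def F0_def by auto
  ultimately have F0G: "F0 \<in> G" using F0Z Z' by (simp add: G_def ksets_def)
  have F0n: "F0 \<notin> G2"
  proof
    assume "F0 \<in> G2"
    then obtain S B where SB: "S \<in> P" "B \<in> Q" "F0 = S \<union> B" by (auto simp: G2_def)
    hence "F0 \<inter> Z = S" by (auto simp: P_def Q_def W_def)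
    thus False using F0Z Z' SB(1) by (simp add: P_def)
  qed
  have fG: "finite G" using finite_subset[of G "Pow {1..n}"] by (auto simp: G_def ksets_def)
  have "card (insert F0 G2) \<le> card G" using F0G G2G fG by (intro card_mono) auto
  moreover have "finite G2" using G2G fG finite_subset by blast
  ultimately have cG: "card G \<ge> card P * card Q + 1" using F0n cG2 by simp
  define a where "a = n - t - 4"
  define b where "b = k - t - 3"
  have ab: "n - t - 2 = a + 2" "k - t - 2 = b + 1" "n - t - 3 = a + 1" "k - t - 3 = b"
    "n - t - 4 = a" using assms(1,2) a_def b_def by auto
  have bi: "real ((a+2) choose (b+1)) - 2 * real ((a+1) choose b) \<le> real (a choose (b+1))"
    using binom_ineq[of a b] by linarith
  have "real ((t + 4) choose 2) * (real ((a+2) choose (b+1)) - 2 * real ((a+1) choose b))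
      \<le> real ((t + 4) choose 2) * real (a choose (b+1))"
    by (intro mult_left_mono bi) auto
  also have "\<dots> < real (card G)"
  proof -
    have "(t + 4 choose 2) * (a choose (b+1)) < card G" using cG cP cQ ab by simp
    thus ?thesis by (metis of_nat_less_iff of_nat_mult)
  qed
  finally show ?thesis using eq ab G_def by simp
qed

end
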